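(* $\mathcal{L}_{\mathsf{SAFA_{init}}}$ and $\mathcal{L}_{\mathsf{KRFA}}$ are incomparable: there is a data language accepted by some SAFA with initialization but by no $k$-register automaton (for any $k$), and there is a data language accepted by some $k$-register automaton but by no SAFA with initialization.
   Context: $D$ is a fixed countably infinite set of data values; for a finite alphabet $\Sigma$, data languages are subsets of $(\Sigma\times D)^*$. A set augmented finite automaton (SAFA) is a tuple $M=(Q,\Sigma\times D,q_0,F,H,\delta)$: $Q$ finite set of states, $q_0\in Q$ initial, $F\subseteq Q$ final, $H=\{h_1,\dots,h_m\}$ a finite collection of (names of) sets of data values, $\delta\subseteq Q\times\Sigma\times C\times OP\times Q$ with $C=\{p(h_i),\,!p(h_i)\}$, $OP=\{-\}\cup\{\mathsf{ins}(h_i)\}$. Configurations are $(q,\langle S_1,\dots,S_m\rangle)$, $S_i\subseteq D$ finite. On reading $(a,d)$, a transition $(q,a,\alpha,op,q')$ from the current state may be taken if $\alpha=p(h_i)$ and $d\in S_i$, or $\alpha=\,!p(h_i)$ and $d\notin S_i$; then the state becomes $q'$ and if $op=\mathsf{ins}(h_j)$, $d$ is added to $S_j$. A word is accepted if some run reads it entirely and ends in $F$. In an ordinary SAFA all sets start empty; a SAFA with initialization additionally specifies initial contents (finite subsets of $D$) of the sets in $H$ before the computation starts. $\mathcal{L}_{\mathsf{SAFA_{init}}}$ is the class of data languages accepted by nondeterministic SAFA with initialization. A $k$-register automaton is a tuple $(Q,\Sigma,\delta,\tau_0,U,q_0,F)$ with finite state set $Q$, initial state $q_0$, final states $F$, initial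 register assignment $\tau_0:\{1,\dots,k\}\to D\cup\{\bot\}$ (non-$\bot$ values pairwise distinct), partial update function $U:Q\times\Sigma\to\{1,\dots,k\}$, and $\delta\subseteq Q\times\Sigma\times\{1,\dots,k\}\times Q$. Reading $(a,d)$ in state $q$: if $d$ equals the content of register $i$, a transition $(q,a,i,q')\in\delta$ is taken (halt if none); otherwise, if $U(q,a)$ is defined, $d$ is written into register $U(q,a)$ and a transition $(q,a,U(q,a),q')\in\delta$ is taken (halt if none or if $U(q,a)$ undefined). A word is accepted if entirely consumed ending in $F$. $\mathcal{L}_{\mathsf{KRFA}}$ is the class of languages accepted by $k$-register automata for some $k\ge 1$. *)

theory Defs
  imports Main "HOL-Library.Countable_Set"
begin

text \<open>Sets of a SAFA are indexed by 0..m-1; registers of a register automaton by 1..k.\<close>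

datatype cond = Mem nat | NotMem nat
datatype setop = NoOp | Ins nat

record ('s, 'd) safa =
  sQ :: "nat set"
  sq0 :: nat
  sF :: "nat set"
  sm :: nat
  sdelta :: "(nat \<times> 's \<times> cond \<times> setop \<times> nat) set"
  sinit :: "nat \<Rightarrow> 'd set"

fun cond_idx :: "cond \<Rightarrow> nat" where
  "cond_idx (Mem i) = i" | "cond_idx (NotMem i) = i"

fun op_ok :: "nat \<Rightarrow> setop \<Rightarrow> bool" where
  "op_ok m NoOp = True" | "op_ok m (Ins j) = (j < m)"

definition safa_init_wf :: "('s, 'd) safa \<Rightarrow> bool" where
  "safa_init_wf M \<longleftrightarrow> finite (sQ M) \<and> sq0 M \<in> sQ M \<and> sF M \<subseteq> sQ M \<and>
     (\<forall>(q, a, c, op, q') \<in> sdelta M. q \<in> sQ M \<and> q' \<in> sQ M \<and> cond_idx c < sm M \<and> op_ok (sm M) op) \<and>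
     (\<forall>i < sm M. finite (sinit M i)) \<and> (\<forall>i \<ge> sm M. sinit M i = {})"

fun cond_holds :: "cond \<Rightarrow> (nat \<Rightarrow> 'd set) \<Rightarrow> 'd \<Rightarrow> bool" where
  "cond_holds (Mem i) S d = (d \<in> S i)"
| "cond_holds (NotMem i) S d = (d \<notin> S i)"

fun apply_op :: "setop \<Rightarrow> (nat \<Rightarrow> 'd set) \<Rightarrow> 'd \<Rightarrow> (nat \<Rightarrow> 'd set)" where
  "apply_op NoOp S d = S"
| "apply_op (Ins j) S d = S(j := insert d (S j))"

inductive safa_run :: "('s, 'd) safa \<Rightarrow> nat \<Rightarrow> (nat \<Rightarrow> 'd set) \<Rightarrow> ('s \<times> 'd) list
                        \<Rightarrow> nat \<Rightarrow> (nat \<Rightarrow> 'd set) \<Rightarrow> bool" for M where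
  safa_nil: "safa_run M q S [] q S"
| safa_cons: "\<lbrakk> (q, a, c, op, q') \<in> sdelta M; cond_holds c S d;
               safa_run M q' (apply_op op S d) w q'' S'' \<rbrakk>
              \<Longrightarrow> safa_run M q S ((a, d) # w) q'' S''"

definition safa_lang :: "('s, 'd) safa \<Rightarrow> ('s \<times> 'd) list set" where
  "safa_lang M = {w. \<exists>q S. safa_run M (sq0 M) (sinit M) w q S \<and> q \<in> sF M}"

definition L_SAFA_init :: "('s \<times> 'd) list set set" where
  "L_SAFA_init = {L. \<exists>M :: ('s, 'd) safa. safa_init_wf M \<and> safa_lang M = L}"

record ('s, 'd) kra =
  rk :: nat                                     \<comment> \<open>number of registers, named 1..k\<close>
  rQ :: "nat set"
  rdelta :: "(nat \<times> 's \<times> nat \<times> nat) set"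
  rtau0 :: "nat \<Rightarrow> 'd option"                   \<comment> \<open>None stands for \<bottom>\<close>
  rU :: "nat \<Rightarrow> 's \<Rightarrow> nat option"
  rq0 :: nat
  rF :: "nat set"

definition kra_wf :: "('s, 'd) kra \<Rightarrow> bool" where
  "kra_wf A \<longleftrightarrow> finite (rQ A) \<and> rq0 A \<in> rQ A \<and> rF A \<subseteq> rQ A \<and>
     (\<forall>(q, a, i, q') \<in> rdelta A. q \<in> rQ A \<and> q' \<in> rQ A \<and> i \<in> {1..rk A}) \<and>
     (\<forall>q a j. rU A q a = Some j \<longrightarrow> q \<in> rQ A \<and> j \<in> {1..rk A}) \<and>
     (\<forall>i. i \<notin> {1..rk A} \<longrightarrow> rtau0 A i = None) \<and>
     (\<forall>i \<in> {1..rk A}. \<forall>j \<in> {1..rk A}. rtau0 A i \<noteq> None \<and> rtau0 A i = rtau0 A j \<longrightarrow> i = j)"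

definition kra_step :: "('s, 'd) kra \<Rightarrow> nat \<Rightarrow> (nat \<Rightarrow> 'd option) \<Rightarrow> 's \<Rightarrow> 'd
                        \<Rightarrow> nat \<Rightarrow> (nat \<Rightarrow> 'd option) \<Rightarrow> bool" where
  "kra_step A q \<tau> a d q' \<tau>' \<longleftrightarrow>
     (\<exists>i \<in> {1..rk A}. \<tau> i = Some d \<and> (q, a, i, q') \<in> rdelta A \<and> \<tau>' = \<tau>)
   \<or> ((\<forall>i \<in> {1..rk A}. \<tau> i \<noteq> Some d) \<and>
      (\<exists>j. rU A q a = Some j \<and> \<tau>' = \<tau>(j := Some d) \<and> (q, a, j, q') \<in> rdelta A))"

inductive kra_run :: "('s, 'd) kra \<Rightarrow> nat \<Rightarrow> (nat \<Rightarrow> 'd option) \<Rightarrow> ('s \<times> 'd) list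
                       \<Rightarrow> nat \<Rightarrow> (nat \<Rightarrow> 'd option) \<Rightarrow> bool" for A where
  kra_nil: "kra_run A q \<tau> [] q \<tau>"
| kra_cons: "\<lbrakk> kra_step A q \<tau> a d q' \<tau>'; kra_run A q' \<tau>' w q'' \<tau>'' \<rbrakk>
             \<Longrightarrow> kra_run A q \<tau> ((a, d) # w) q'' \<tau>''"

definition kra_lang :: "('s, 'd) kra \<Rightarrow> ('s \<times> 'd) list set" where
  "kra_lang A = {w. \<exists>q \<tau>. kra_run A (rq0 A) (rtau0 A) w q \<tau> \<and> q \<in> rF A}"

definition L_KRFA :: "('s \<times> 'd) list set set" where
  "L_KRFA = {L. \<exists>A :: ('s, 'd) kra. rk A \<ge> 1 \<and> kra_wf A \<and> kra_lang A = L}"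

end

theory Submission
  imports Defs
begin

lemma fresh_inj:
  assumes "infinite (UNIV :: 'd set)" and "finite (X :: 'd set)"
  shows "\<exists>f::nat \<Rightarrow> 'd. inj f \<and> range f \<inter> X = {}"
proof -
  have "infinite (UNIV - X)" using assms by (simp add: Diff_infinite_finite)
  from infinite_countable_subset[OF this] show ?thesis by blast
qed

lemma apply_op_mono: "S h \<subseteq> apply_op op S d h"
  by (cases op) auto

lemma apply_op_bound: "apply_op op S d h \<subseteq> insert d (S h)"
  by (cases op) auto

lemma apply_op_agree: "x \<noteq> d \<Longrightarrow> x \<noteq> y \<Longrightarrow> (x \<in> apply_op op S d h) = (x \<in> apply_op op S y h)"
  by (cases op) simp_all

lemma safa_run_mono: "safa_run M q S w q' S' \<Longrightarrow> S h \<subseteq> S' h"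
proof (induction rule: safa_run.induct)
  case (safa_nil q S)
  then show ?case by simp
next
  case (safa_cons q a c op q' S d w q'' S'')
  then show ?case using apply_op_mono[of S h op d] by (meson order_trans)
qed

lemma safa_run_bound: "safa_run M q S w q' S' \<Longrightarrow> S' h \<subseteq> S h \<union> snd ` set w"
proof (induction rule: safa_run.induct)
  case (safa_nil q S)
  then show ?case by simp
next
  case (safa_cons q a c op q' S d w q'' S'')
  then show ?case using apply_op_bound[of op S d h] by auto
qed

lemma safa_run_split: "safa_run M q S (u @ v) q'' S'' \<Longrightarrow>
   \<exists>q' S'. safa_run M q S u q' S' \<and> safa_run M q' S' v q'' S''"
proof (induction u arbitrary: q S)
  case Nil
  then show ?case by (auto intro: safa_nil)
next
  case (Cons x u)
  obtain a d where x: "x = (a, d)" by (cases x)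
  from Cons.prems x obtain c op q1 where
    "(q, a, c, op, q1) \<in> sdelta M" "cond_holds c S d"
    "safa_run M q1 (apply_op op S d) (u @ v) q'' S''"
    by (auto elim: safa_run.cases)
  with Cons.IH x show ?case by (meson safa_cons)
qed

lemma safa_run_join: "safa_run M q S u q' S' \<Longrightarrow> safa_run M q' S' v q'' S'' \<Longrightarrow>
   safa_run M q S (u @ v) q'' S''"
  by (induction rule: safa_run.induct) (auto intro: safa_cons)

lemma cond_agree: "(\<forall>h. (d \<in> S h) = (d \<in> T h)) \<Longrightarrow> cond_holds c S d = cond_holds c T d"
  by (cases c) auto

lemma safa_run_transfer: "safa_run M q S w q' S' \<Longrightarrow>
   (\<forall>d \<in> snd ` set w. \<forall>h. (d \<in> S h) = (d \<in> T h)) \<Longrightarrow> \<exists>T'. safa_run M q T w q' T'"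
proof (induction arbitrary: T rule: safa_run.induct)
  case (safa_nil q S)
  then show ?case by (auto intro: safa_run.safa_nil)
next
  case (safa_cons q a c op q' S d w q'' S'')
  have "cond_holds c T d" using safa_cons cond_agree[of d S T c] by auto
  moreover have "\<forall>x \<in> snd ` set w. \<forall>h. (x \<in> apply_op op S d h) = (x \<in> apply_op op T d h)"
    using safa_cons.prems by (cases op) auto
  then obtain T' where "safa_run M q' (apply_op op T d) w q'' T'" using safa_cons.IH by blast
  ultimately show ?case using safa_cons.hyps(1) by (meson safa_run.safa_cons)
qed


section \<open>Part 1: all-distinct language\<close>

definition M1 :: "('s, 'd) safa" where
  "M1 = \<lparr> sQ = {0}, sq0 = 0, sF = {0}, sm = 1,
          sdelta = {(0, a, NotMem 0, Ins 0, 0) | a. True}, sinit = (\<lambda>_. {}) \<rparr>"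

lemma M1_run_D: "safa_run M1 q S w q' S' \<Longrightarrow>
   distinct (map snd w) \<and> (\<forall>d \<in> set (map snd w). d \<notin> S 0)"
proof (induction rule: safa_run.induct)
  case (safa_nil q S)
  then show ?case by simp
next
  case (safa_cons q a c op q' S d w q'' S'')
  then have "c = NotMem 0" "op = Ins 0" by (auto simp: M1_def)
  with safa_cons show ?case by auto
qed

lemma M1_run_I: "distinct (map snd w) \<Longrightarrow> (\<forall>d \<in> set (map snd w). d \<notin> S 0) \<Longrightarrow>
   \<exists>S'. safa_run M1 0 S w 0 S'"
proof (induction w arbitrary: S)
  case Nil
  then show ?case by (auto intro: safa_nil)
next
  case (Cons x w)
  obtain a d where x: "x = (a, d)" by (cases x)
  let ?S = "S(0 := insert d (S 0))"
  have "\<forall>y\<in>set (map snd w). y \<notin> ?S 0" using Cons.prems x by auto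
  have "\<exists>S'. safa_run M1 0 ?S w 0 S'" by (rule Cons.IH) (use Cons.prems x in auto)
  then obtain S' where "safa_run M1 0 ?S w 0 S'" by blast
  moreover have "(0, a, NotMem 0, Ins 0, 0) \<in> sdelta M1" by (simp add: M1_def)
  moreover have "cond_holds (NotMem 0) S d" using Cons x by auto
  ultimately show ?case using x by (metis apply_op.simps(2) safa_cons)
qed

lemma M1_lang: "safa_lang M1 = {w. distinct (map snd w)}"
  unfolding safa_lang_def
  using M1_run_D M1_run_I by (fastforce simp: M1_def)

lemma M1_wf: "safa_init_wf M1"
  by (auto simp: safa_init_wf_def M1_def)

lemma kra_run_vals: "kra_run A q \<tau> w q' \<tau>' \<Longrightarrow>
   \<tau>' i = Some x \<Longrightarrow> \<tau> i = Some x \<or> x \<in> snd ` set w"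
proof (induction arbitrary: i rule: kra_run.induct)
  case (kra_nil q \<tau>)
  then show ?case by simp
next
  case (kra_cons q \<tau> a d q' \<tau>' w q'' \<tau>'')
  then have "\<tau>' i = Some x \<or> x \<in> snd ` set w" by blast
  moreover have "\<tau>' i = Some x \<Longrightarrow> \<tau> i = Some x \<or> x = d"
    using kra_cons.hyps(1) unfolding kra_step_def by (auto split: if_splits)
  ultimately show ?case by auto
qed

lemma kra_run_split: "kra_run A q \<tau> (u @ v) q'' \<tau>'' \<Longrightarrow>
   \<exists>q' \<tau>'. kra_run A q \<tau> u q' \<tau>' \<and> kra_run A q' \<tau>' v q'' \<tau>''"
proof (induction u arbitrary: q \<tau>)
  case Nil
  then show ?case by (auto intro: kra_nil)
next
  case (Cons x u)
  obtain a d where x: "x = (a, d)" by (cases x)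
  from Cons.prems x obtain q1 \<tau>1 where
    "kra_step A q \<tau> a d q1 \<tau>1" "kra_run A q1 \<tau>1 (u @ v) q'' \<tau>''"
    by (auto elim: kra_run.cases)
  with Cons.IH x show ?case by (meson kra_cons)
qed

lemma kra_run_join: "kra_run A q \<tau> u q' \<tau>' \<Longrightarrow> kra_run A q' \<tau>' v q'' \<tau>'' \<Longrightarrow>
   kra_run A q \<tau> (u @ v) q'' \<tau>''"
  by (induction rule: kra_run.induct) (auto intro: kra_cons)

lemma not_KRFA1:
  assumes inf: "infinite (UNIV :: 'd set)"
  shows "{w :: ('s \<times> 'd) list. distinct (map snd w)} \<notin> L_KRFA"
proof
  assume "{w :: ('s \<times> 'd) list. distinct (map snd w)} \<in> L_KRFA"
  then obtain A :: "('s, 'd) kra" where wf: "kra_wf A" and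
    lang: "kra_lang A = {w. distinct (map snd w)}" unfolding L_KRFA_def by blast
  define k where "k = rk A"
  define X where "X = the ` rtau0 A ` {1..k}"
  have ranX: "rtau0 A i = Some x \<Longrightarrow> x \<in> X" for i x
    using wf unfolding kra_wf_def X_def k_def
    by (metis (no_types, lifting) image_eqI option.distinct(1) option.sel)
  obtain g :: "nat \<Rightarrow> 'd" where g: "inj g" "range g \<inter> X = {}"
    using fresh_inj[OF inf, of X] by (auto simp: X_def)
  fix a :: 's
  define u where "u = map (\<lambda>i. (a, g i)) [0..<Suc k]"
  define e where "e = g (Suc k)"
  have "map snd (u @ [(a, e)]) = map g [0..<Suc (Suc k)]" by (simp add: u_def e_def)
  moreover have "distinct (map g [0..<Suc (Suc k)])"
    by (metis distinct_map distinct_upt g(1) inj_on_subset subset_UNIV)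
  ultimately have "distinct (map snd (u @ [(a, e)]))" by (simp only:)
  then have "u @ [(a, e)] \<in> kra_lang A" using lang by simp
  then obtain qf \<tau>f where r: "kra_run A (rq0 A) (rtau0 A) (u @ [(a, e)]) qf \<tau>f" "qf \<in> rF A"
    unfolding kra_lang_def by blast
  then obtain q \<tau> where r1: "kra_run A (rq0 A) (rtau0 A) u q \<tau>"
    and r2: "kra_run A q \<tau> [(a, e)] qf \<tau>f" using kra_run_split[OF r(1)] by blast
  from r2 obtain q1 \<tau>1 where st: "kra_step A q \<tau> a e q1 \<tau>1" and "kra_run A q1 \<tau>1 [] qf \<tau>f"
    by (auto elim: kra_run.cases)
  then have q1: "q1 = qf" by (auto elim: kra_run.cases)
  have snd_u: "snd ` set u = g ` {0..<Suc k}" unfolding u_def by (simp only: set_map image_image set_upt snd_conv)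
  have vals: "\<tau> i = Some x \<Longrightarrow> x \<in> X \<or> x \<in> g ` {0..<Suc k}" for i x
    using kra_run_vals[OF r1] ranX snd_u by blast
  have e_not: "\<tau> i \<noteq> Some e" for i
  proof
    assume "\<tau> i = Some e"
    then have "e \<in> X \<or> e \<in> g ` {0..<Suc k}" using vals by blast
    then show False
    proof
      assume "e \<in> X" then show False using g(2) unfolding e_def by blast
    next
      assume "e \<in> g ` {0..<Suc k}"
      then obtain x where "x < Suc k" "g (Suc k) = g x" unfolding e_def by auto
      then show False using injD[OF g(1)] by fastforce
    qed
  qed
  have "\<exists>j < Suc k. \<forall>i \<in> {1..k}. \<tau> i \<noteq> Some (g j)"
  proof (rule ccontr)
    assume "\<not> ?thesis"
    then have "Some ` g ` {0..<Suc k} \<subseteq> \<tau> ` {1..k}" by force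
    then have "card (Some ` g ` {0..<Suc k}) \<le> card (\<tau> ` {1..k})" by (intro card_mono) auto
    also have "\<dots> \<le> k" using card_image_le[of "{1..k}" \<tau>] by simp
    moreover have "inj_on (Some \<circ> g) {0..<Suc k}"
      by (metis comp_inj_on inj_Some inj_on_subset g(1) subset_UNIV)
    then have "card ((Some \<circ> g) ` {0..<Suc k}) = Suc k" by (simp only: card_image card_atLeastLessThan diff_zero)
    then have "card (Some ` g ` {0..<Suc k}) = Suc k" by (simp only: image_comp)
    ultimately show False by linarith
  qed
  then obtain j where j: "j < Suc k" "\<forall>i \<in> {1..k}. \<tau> i \<noteq> Some (g j)" by blast
  from st e_not obtain jj where "rU A q a = Some jj" "(q, a, jj, q1) \<in> rdelta A"
    unfolding kra_step_def by auto
  then have "kra_step A q \<tau> a (g j) q1 (\<tau>(jj := Some (g j)))"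
    using j unfolding kra_step_def k_def by auto
  then have "kra_run A q \<tau> [(a, g j)] q1 (\<tau>(jj := Some (g j)))"
    by (meson kra_cons kra_nil)
  then have rr: "kra_run A (rq0 A) (rtau0 A) (u @ [(a, g j)]) qf (\<tau>(jj := Some (g j)))"
    using kra_run_join[OF r1] q1 by blast
  have "u @ [(a, g j)] \<in> kra_lang A" unfolding kra_lang_def mem_Collect_eq
    by (intro exI conjI, rule rr, rule r(2))
  then have dd: "distinct (map snd (u @ [(a, g j)]))" unfolding lang by (rule CollectD)
  have "g j \<in> g ` {0..<Suc k}" using j by (intro imageI) simp
  then have g1: "g j \<in> set (map snd u)" unfolding set_map snd_u .
  from dd have g2: "set (map snd u) \<inter> set (map snd [(a, g j)]) = {}"
    unfolding map_append distinct_append by (elim conjE) assumption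
  have g3: "g j \<in> set (map snd [(a, g j)])" by simp
  from g1 g2 g3 show False by blast
qed

section \<open>Part 2: pairs language\<close>

fun pr :: "'d option \<Rightarrow> ('s \<times> 'd) list \<Rightarrow> bool" where
  "pr None [] = True"
| "pr (Some d) [] = False"
| "pr None ((a, d) # w) = pr (Some d) w"
| "pr (Some d) ((a, d') # w) = (d' = d \<and> pr None w)"

lemma pr_append: "pr x u \<Longrightarrow> pr x (u @ v) = pr None v"
  by (induction x u rule: pr.induct) auto

definition A2 :: "('s, 'd) kra" where
  "A2 = \<lparr> rk = 1, rQ = {0, 1}, rdelta = {(0, a, 1, 1) | a. True} \<union> {(1, a, 1, 0) | a. True},
         rtau0 = (\<lambda>_. None), rU = (\<lambda>q a. if q = 0 then Some 1 else None), rq0 = 0, rF = {0} \<rparr>"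

definition st :: "nat \<Rightarrow> (nat \<Rightarrow> 'd option) \<Rightarrow> 'd option" where
  "st q \<tau> = (if q = 0 then None else \<tau> 1)"

lemma A2_step: "kra_step A2 q \<tau> a d q1 \<tau>1 \<Longrightarrow> q \<in> {0, 1} \<Longrightarrow> (q = 1 \<longrightarrow> \<tau> 1 \<noteq> None) \<Longrightarrow>
  (q = 0 \<and> q1 = 1 \<and> \<tau>1 1 = Some d) \<or> (q = 1 \<and> q1 = 0 \<and> \<tau>1 = \<tau> \<and> \<tau> 1 = Some d)"
  unfolding kra_step_def A2_def by auto

lemma A2_D: "kra_run A2 q \<tau> w q' \<tau>' \<Longrightarrow> q \<in> {0, 1} \<Longrightarrow> (q = 1 \<longrightarrow> \<tau> 1 \<noteq> None) \<Longrightarrow>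
   q' = 0 \<Longrightarrow> pr (st q \<tau>) w"
proof (induction rule: kra_run.induct)
  case (kra_nil q \<tau>)
  then show ?case by (simp add: st_def)
next
  case (kra_cons q \<tau> a d q1 \<tau>1 w q'' \<tau>'')
  from A2_step[OF kra_cons.hyps(1) kra_cons.prems(1,2)]
  show ?case
  proof
    assume h: "q = 0 \<and> q1 = 1 \<and> \<tau>1 1 = Some d"
    then have "pr (st q1 \<tau>1) w" using kra_cons by auto
    then show ?case using h by (simp add: st_def)
  next
    assume h: "q = 1 \<and> q1 = 0 \<and> \<tau>1 = \<tau> \<and> \<tau> 1 = Some d"
    then have "pr (st q1 \<tau>1) w" using kra_cons by auto
    then show ?case using h by (simp add: st_def)
  qed
qed

lemma A2_I: "pr (st q \<tau>) w \<Longrightarrow> q \<in> {0, 1} \<Longrightarrow> (q = 1 \<longrightarrow> \<tau> 1 \<noteq> None) \<Longrightarrow>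
   \<exists>\<tau>'. kra_run A2 q \<tau> w 0 \<tau>'"
proof (induction w arbitrary: q \<tau>)
  case Nil
  then have "q = 0" by (cases "\<tau> 1") (auto simp: st_def split: if_splits)
  then show ?case by (auto intro: kra_nil)
next
  case (Cons x w)
  obtain a d where x: "x = (a, d)" by (cases x)
  show ?case
  proof (cases "q = 0")
    case True
    define \<tau>1 where "\<tau>1 = (if \<tau> 1 = Some d then \<tau> else \<tau>(1 := Some d))"
    have s: "kra_step A2 q \<tau> a d 1 \<tau>1"
      using True unfolding kra_step_def A2_def \<tau>1_def by auto
    have "\<tau>1 1 = Some d" by (simp add: \<tau>1_def)
    moreover have "pr (st 1 \<tau>1) w" using Cons.prems x True \<open>\<tau>1 1 = Some d\<close> by (simp add: st_def)
    ultimately obtain \<tau>' where "kra_run A2 1 \<tau>1 w 0 \<tau>'" using Cons.IH[of 1 \<tau>1] by auto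
    then show ?thesis using s x by (meson kra_cons)
  next
    case False
    then have q1: "q = 1" using Cons.prems by auto
    then obtain d0 where d0: "\<tau> 1 = Some d0" using Cons.prems by auto
    then have "d = d0" "pr None w" using Cons.prems(1) x q1 by (auto simp: st_def)
    then have s: "kra_step A2 q \<tau> a d 0 \<tau>"
      using q1 d0 unfolding kra_step_def A2_def by auto
    have "pr (st 0 \<tau>) w" using \<open>pr None w\<close> by (simp add: st_def)
    then obtain \<tau>' where "kra_run A2 0 \<tau> w 0 \<tau>'" using Cons.IH[of 0 \<tau>] by auto
    then show ?thesis using s x by (meson kra_cons)
  qed
qed

lemma A2_lang: "kra_lang (A2 :: ('s, 'd) kra) = {w. pr None w}"
proof -
  have "rq0 A2 = 0" "rtau0 A2 = (\<lambda>_. None)" "rF A2 = {0}" by (simp_all add: A2_def)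
  note eqs = this
  show ?thesis
  proof (intro set_eqI iffI)
    fix w assume "w \<in> kra_lang A2"
    then obtain q \<tau> where r: "kra_run A2 0 (\<lambda>_. None) w q \<tau>" "q = 0"
      unfolding kra_lang_def eqs by auto
    have "pr (st 0 (\<lambda>_. None)) w" by (rule A2_D[OF r(1)]) (use r(2) in auto)
    then show "w \<in> {w. pr None w}" by (simp add: st_def)
  next
    fix w assume "w \<in> {w. pr None w}"
    then have pw: "pr (st 0 (\<lambda>_. None)) w" by (simp add: st_def)
    obtain \<tau>' where "kra_run A2 0 (\<lambda>_. None) w 0 \<tau>'" using A2_I[OF pw] by auto
    then show "w \<in> kra_lang A2" unfolding kra_lang_def eqs by auto
  qed
qed

lemma A2_wf: "kra_wf A2" "rk A2 \<ge> 1"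
  by (auto simp: kra_wf_def A2_def)

lemma not_SAFA2:
  assumes inf: "infinite (UNIV :: 'd set)"
  shows "{w :: ('s \<times> 'd) list. pr None w} \<notin> L_SAFA_init"
proof
  assume "{w :: ('s \<times> 'd) list. pr None w} \<in> L_SAFA_init"
  then obtain M :: "('s, 'd) safa" where wf: "safa_init_wf M" and
    lang: "safa_lang M = {w. pr None w}" unfolding L_SAFA_init_def by blast
  define m where "m = sm M"
  define I where "I = (\<Union>i<m. sinit M i)"
  have finI: "finite I" using wf unfolding I_def m_def safa_init_wf_def by auto
  have initI: "sinit M h \<subseteq> I" for h
  proof (cases "h < m")
    case True then show ?thesis unfolding I_def by blast
  next
    case False then show ?thesis using wf unfolding safa_init_wf_def m_def by auto
  qed
  obtain f :: "nat \<Rightarrow> 'd" where f: "inj f" "range f \<inter> I = {}"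
    using fresh_inj[OF inf finI] by blast
  have finj: "f x = f y \<longleftrightarrow> x = y" for x y using f(1) by (auto dest: injD)
  fix a :: 's
  define N where "N = Suc m"
  define P where "P i = [(a, f i), (a, f i)]" for i
  define W where "W j = concat (map P [0..<j])" for j
  define R where "R j = concat (map P [j..<N])" for j
  define H where "H S j = {h. h < m \<and> (\<exists>i<j. f i \<in> S h)}" for S :: "nat \<Rightarrow> 'd set" and j
  have prC: "pr None (concat (map P xs))" for xs
    by (induction xs) (auto simp: P_def)
  have setC: "snd ` set (concat (map P xs)) = f ` set xs" for xs
    by (induction xs) (auto simp: P_def)
  have setW: "snd ` set (W j) = f ` {0..<j}" for j
    unfolding W_def setC by simp
  have setR: "snd ` set (R j) = f ` {j..<N}" for j
    unfolding R_def setC by simp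
  have Rstep: "j < N \<Longrightarrow> R j = (a, f j) # (a, f j) # R (Suc j)" for j
    by (simp add: R_def P_def upt_conv_Cons)
  have WSuc: "W (Suc j) = (W j @ [(a, f j)]) @ [(a, f j)]" for j
    by (simp add: W_def P_def)
  have HS: "H S j \<subseteq> {..<m}" for S j by (auto simp: H_def)
  have claim: "j \<le> N \<Longrightarrow> \<exists>q S qf Sf. safa_run M (sq0 M) (sinit M) (W j) q S \<and>
      safa_run M q S (R j) qf Sf \<and> qf \<in> sF M \<and> j \<le> card (H S j)" for j
  proof (induction j)
    case 0
    have "W N \<in> safa_lang M" using lang prC[of "[0..<N]"] by (simp add: W_def)
    then obtain qf Sf where "safa_run M (sq0 M) (sinit M) (W N) qf Sf" "qf \<in> sF M"
      unfolding safa_lang_def by blast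
    moreover have "R 0 = W N" by (simp add: R_def W_def)
    moreover have "W 0 = []" by (simp add: W_def)
    ultimately show ?case by (metis le0 safa_nil)
  next
    case (Suc j)
    then have jN: "j < N" by simp
    from Suc obtain q S qf Sf where r0: "safa_run M (sq0 M) (sinit M) (W j) q S"
      and r: "safa_run M q S (R j) qf Sf" and qf: "qf \<in> sF M" and cardH: "j \<le> card (H S j)"
      by auto
    from r Rstep[OF jN] have r': "safa_run M q S ((a, f j) # (a, f j) # R (Suc j)) qf Sf" by simp
    then obtain c1 op1 q2 where t1: "(q, a, c1, op1, q2) \<in> sdelta M" "cond_holds c1 S (f j)"
      and r2: "safa_run M q2 (apply_op op1 S (f j)) ((a, f j) # R (Suc j)) qf Sf"
      by (auto elim: safa_run.cases)
    define S2 where "S2 = apply_op op1 S (f j)"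
    from r2 obtain c op q3 where t2: "(q2, a, c, op, q3) \<in> sdelta M" and ch: "cond_holds c S2 (f j)"
      and r3: "safa_run M q3 (apply_op op S2 (f j)) (R (Suc j)) qf Sf"
      unfolding S2_def by (auto elim: safa_run.cases)
    have step1: "safa_run M q S [(a, f j)] q2 S2"
      unfolding S2_def by (rule safa_cons[OF t1]) (rule safa_nil)
    have pre: "safa_run M (sq0 M) (sinit M) (W j @ [(a, f j)]) q2 S2"
      by (rule safa_run_join[OF r0 step1])
    have bad: False if y1: "y \<noteq> f j" and y2: "y \<notin> f ` {Suc j..<N}" and y3: "cond_holds c S2 y" for y
    proof -
      have agree: "\<forall>d \<in> snd ` set (R (Suc j)). \<forall>h. (d \<in> apply_op op S2 (f j) h) = (d \<in> apply_op op S2 y h)"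
      proof (intro ballI allI)
        fix d h assume "d \<in> snd ` set (R (Suc j))"
        then obtain k where k: "k \<in> {Suc j..<N}" "d = f k" using setR by blast
        then have "d \<noteq> f j" using finj by auto
        moreover have "d \<noteq> y" using k y2 by blast
        ultimately show "(d \<in> apply_op op S2 (f j) h) = (d \<in> apply_op op S2 y h)"
          by (rule apply_op_agree)
      qed
      obtain T' where "safa_run M q3 (apply_op op S2 y) (R (Suc j)) qf T'"
        using safa_run_transfer[OF r3 agree] by blast
      then have "safa_run M q2 S2 ((a, y) # R (Suc j)) qf T'"
        by (rule safa_cons[OF t2 y3])
      then have "safa_run M (sq0 M) (sinit M) ((W j @ [(a, f j)]) @ ((a, y) # R (Suc j))) qf T'"
        by (rule safa_run_join[OF pre])
      then have "(W j @ [(a, f j)]) @ ((a, y) # R (Suc j)) \<in> safa_lang M"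
        unfolding safa_lang_def using qf by blast
      then have "pr None (W j @ ((a, f j) # (a, y) # R (Suc j)))" using lang by simp
      moreover have "pr None (W j)" using prC by (simp add: W_def)
      ultimately have "pr None ((a, f j) # (a, y) # R (Suc j))" using pr_append by metis
      then show False using y1 by simp
    qed
    have S2sub: "S2 h \<subseteq> I \<union> f ` {0..<Suc j}" for h
    proof -
      have "S h \<subseteq> sinit M h \<union> snd ` set (W j)" by (rule safa_run_bound[OF r0])
      moreover have "S2 h \<subseteq> insert (f j) (S h)" unfolding S2_def by (rule apply_op_bound)
      moreover have "f ` {0..<Suc j} = insert (f j) (f ` {0..<j})"
        by (simp only: atLeast0_lessThan_Suc image_insert)
      ultimately show ?thesis using initI[of h] setW[of j] by auto
    qed
    show ?case
    proof (cases c)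
      case (NotMem h)
      have "f N \<notin> S2 h"
      proof
        assume "f N \<in> S2 h"
        then have "f N \<in> I \<or> f N \<in> f ` {0..<Suc j}" using S2sub by blast
        then show False using f(2) jN finj by auto
      qed
      then have "cond_holds c S2 (f N)" using NotMem by simp
      moreover have "f N \<noteq> f j" using jN finj by simp
      moreover have "f N \<notin> f ` {Suc j..<N}" using finj by auto
      ultimately show ?thesis using bad by blast
    next
      case (Mem h)
      have hm: "h < m" using wf t2 Mem unfolding safa_init_wf_def m_def by fastforce
      have fj: "f j \<in> S2 h" using ch Mem by simp
      show ?thesis
      proof (cases "h \<in> H S j")
        case True
        then obtain i where i: "i < j" "f i \<in> S h" unfolding H_def by blast
        then have "f i \<in> S2 h" unfolding S2_def using apply_op_mono[of S h op1 "f j"] by blast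
        then have "cond_holds c S2 (f i)" using Mem by simp
        moreover have "f i \<noteq> f j" using i finj by simp
        moreover have "f i \<notin> f ` {Suc j..<N}" using i finj by auto
        ultimately show ?thesis using bad by blast
      next
        case False
        define S3 where "S3 = apply_op op S2 (f j)"
        have step2: "safa_run M q2 S2 [(a, f j)] q3 S3"
          unfolding S3_def by (rule safa_cons[OF t2 ch]) (rule safa_nil)
        have rW: "safa_run M (sq0 M) (sinit M) (W (Suc j)) q3 S3"
          unfolding WSuc by (rule safa_run_join[OF pre step2])
        have mono: "S h' \<subseteq> S3 h'" for h'
          unfolding S3_def S2_def by (rule order_trans[OF apply_op_mono apply_op_mono])
        have "insert h (H S j) \<subseteq> H S3 (Suc j)"
        proof
          fix h' assume "h' \<in> insert h (H S j)"
          then show "h' \<in> H S3 (Suc j)"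
          proof
            assume "h' = h"
            moreover have "f j \<in> S3 h" using fj apply_op_mono[of S2 h op "f j"] unfolding S3_def by blast
            ultimately show ?thesis using hm unfolding H_def by blast
          next
            assume "h' \<in> H S j"
            then obtain i where "h' < m" "i < j" "f i \<in> S h'" unfolding H_def by blast
            then show ?thesis using mono[of h'] unfolding H_def by (blast intro: less_SucI)
          qed
        qed
        moreover have "finite (H S3 (Suc j))" using HS finite_subset by blast
        ultimately have "card (insert h (H S j)) \<le> card (H S3 (Suc j))" by (rule card_mono[rotated])
        moreover have "card (insert h (H S j)) = Suc (card (H S j))"
          using False HS finite_subset by (metis card_insert_disjoint finite_lessThan)
        ultimately have "Suc j \<le> card (H S3 (Suc j))" using cardH by linarith
        then show ?thesis using rW r3 qf unfolding S3_def by blast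
      qed
    qed
  qed
  from claim[of N] obtain S where "N \<le> card (H S N)" by auto
  moreover have "card (H S N) \<le> m" using card_mono[OF _ HS] by fastforce
  ultimately show False unfolding N_def by linarith
qed

theorem theorem16:
  assumes "infinite (UNIV :: 'd set)" and "countable (UNIV :: 'd set)"
  shows "(\<exists>L :: ('s::finite \<times> 'd) list set. L \<in> L_SAFA_init \<and> L \<notin> L_KRFA) \<and>
         (\<exists>L :: ('s::finite \<times> 'd) list set. L \<in> L_KRFA \<and> L \<notin> L_SAFA_init)"
proof
  have "{w :: ('s \<times> 'd) list. distinct (map snd w)} \<in> L_SAFA_init"
    unfolding L_SAFA_init_def using M1_wf M1_lang by blast
  then show "\<exists>L :: ('s::finite \<times> 'd) list set. L \<in> L_SAFA_init \<and> L \<notin> L_KRFA"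
    using not_KRFA1[OF assms(1)] by blast
next
  have "{w :: ('s \<times> 'd) list. pr None w} \<in> L_KRFA"
    unfolding L_KRFA_def using A2_wf A2_lang by blast
  then show "\<exists>L :: ('s::finite \<times> 'd) list set. L \<in> L_KRFA \<and> L \<notin> L_SAFA_init"
    using not_SAFA2[OF assms(1)] by blast
qed

end
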